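(* Let $\mathcal{F}$ be a semi-metric space with semi-metric $d$, $x\in\mathcal{F}$, and $X_1,X_2,\ldots$ i.i.d. $\mathcal{F}$-valued random elements. Let $\varphi(h)=P(X_1\in B(x,h))$ where $B(x,h)=\{x':d(x',x)\le h\}$, and $\varphi^{-1}(t)=\inf\{h:\varphi(h)\ge t\}$. Let $k=k_n$ satisfy $k/n\to0$ and $k/\log n\to\infty$, and let $H=\inf\{h\in\mathbb{R}:\sum_{i=1}^nI\{X_i\in B(x,h)\}\ge k\}$. Then $P\big(H>\varphi^{-1}(2k/n)\ \text{infinitely often}\big)=0$, i.e. almost surely $H\le\varphi^{-1}(2k/n)$ for all $n$ large enough. *)

theory Defs
  imports "HOL-Probability.Probability"
begin

definition semimetric_on :: "'a set \<Rightarrow> ('a \<Rightarrow> 'a \<Rightarrow> real) \<Rightarrow> bool" where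
  "semimetric_on S d \<longleftrightarrow> (\<forall>y\<in>S. \<forall>z\<in>S. d y z \<ge> 0 \<and> d y z = d z y) \<and> (\<forall>y\<in>S. d y y = 0)"

definition sball :: "'a set \<Rightarrow> ('a \<Rightarrow> 'a \<Rightarrow> real) \<Rightarrow> 'a \<Rightarrow> real \<Rightarrow> 'a set" where
  "sball S d x h = {x' \<in> S. d x' x \<le> h}"

definition small_ball_prob :: "'w measure \<Rightarrow> ('w \<Rightarrow> 'a) \<Rightarrow> 'a set \<Rightarrow> ('a \<Rightarrow> 'a \<Rightarrow> real) \<Rightarrow> 'a \<Rightarrow> real \<Rightarrow> real" where
  "small_ball_prob M Y S d x h = measure M {\<omega> \<in> space M. Y \<omega> \<in> sball S d x h}"

definition gen_inv :: "(real \<Rightarrow> real) \<Rightarrow> real \<Rightarrow> real" where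
  "gen_inv \<phi> t = Inf {h. \<phi> h \<ge> t}"

definition knn_radius :: "'a set \<Rightarrow> ('a \<Rightarrow> 'a \<Rightarrow> real) \<Rightarrow> 'a \<Rightarrow> (nat \<Rightarrow> 'a) \<Rightarrow> nat \<Rightarrow> nat \<Rightarrow> real" where
  "knn_radius S d x xs n k =
     Inf {h. (\<Sum>i\<in>{1..n}. indicator (sball S d x h) (xs i)) \<ge> (real k)}"

end

theory Submission
  imports Defs
begin

lemma (in prob_space) chernoff_aux:
  fixes X :: "nat \<Rightarrow> 'a \<Rightarrow> 'b" and B :: "'b set" and N :: "'b measure"
  assumes meas: "\<And>i. i \<ge> 1 \<Longrightarrow> X i \<in> measurable M N"
    and indep: "indep_vars (\<lambda>_. N) X {1..}" and B: "B \<in> sets N"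
    and p: "\<And>i. i \<ge> 1 \<Longrightarrow> prob {\<omega>\<in>space M. X i \<omega> \<in> B} = p"
  shows "prob {\<omega>\<in>space M. (\<Sum>i\<in>{1..n}. indicator B (X i \<omega>)) < real k} \<le> 2^k * exp(-real n * p/2)"
proof -
  define f where "f = (\<lambda>y. if y \<in> B then 1/2 else (1::real))"
  have fm: "f \<in> borel_measurable N" unfolding f_def
    by (intro measurable_If_set) (auto simp: B)
  have ind: "indep_vars (\<lambda>_. borel) (\<lambda>i \<omega>. f (X i \<omega>)) {1..n}"
    by (rule indep_vars_subset[OF indep_vars_compose2[OF indep, of "\<lambda>_. f"]]) (auto simp: fm)
  have fXm: "(\<lambda>\<omega>. f (X i \<omega>)) \<in> borel_measurable M" if "i \<ge> 1" for i
    using fm meas[OF that] by measurable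
  have int_i: "integrable M (\<lambda>\<omega>. f (X i \<omega>))" if "i \<ge> 1" for i
    by (rule integrable_const_bound[where B=1, OF _ fXm[OF that]]) (auto simp: f_def)
  have Xset: "{\<omega>\<in>space M. X i \<omega> \<in> B} \<in> events" if "i \<ge> 1" for i
    using meas[OF that] B by measurable
  have E_i: "expectation (\<lambda>\<omega>. f (X i \<omega>)) = 1 - p/2" if "i \<ge> 1" for i
  proof -
    have "expectation (\<lambda>\<omega>. f (X i \<omega>)) = expectation (\<lambda>\<omega>. 1 - (1/2) * indicator {\<omega>\<in>space M. X i \<omega> \<in> B} \<omega>)"
      by (intro Bochner_Integration.integral_cong) (auto simp: f_def indicator_def)
    also have "\<dots> = 1 - (1/2) * prob {\<omega>\<in>space M. X i \<omega> \<in> B}"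
      using Xset[OF that] emeasure_finite[of "{\<omega>\<in>space M. X i \<omega> \<in> B}"]
      by (subst Bochner_Integration.integral_diff)
         (auto simp: prob_space emeasure_eq_measure intro!: integrable_real_indicator integrable_divide)
    finally show ?thesis using p[OF that] by simp
  qed
  have p01: "0 \<le> p" "p \<le> 1" using p[of 1] by auto
  have E: "expectation (\<lambda>\<omega>. \<Prod>i\<in>{1..n}. f (X i \<omega>)) = (1 - p/2)^n"
    using indep_vars_lebesgue_integral[OF _ ind] int_i E_i by simp
  have Eint: "integrable M (\<lambda>\<omega>. \<Prod>i\<in>{1..n}. f (X i \<omega>))"
    using indep_vars_integrable[OF _ ind] int_i by simp
  have "(1 - p/2)^n \<le> exp (-p/2)^n"
    using p01 exp_ge_add_one_self[of "-p/2"] by (intro power_mono) auto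
  also have "\<dots> = exp (-real n * p/2)" by (simp add: exp_of_nat_mult[symmetric])
  finally have Ebound: "(1 - p/2)^n \<le> exp (-real n * p/2)" .
  have prodeq: "(\<Prod>i\<in>{1..n}. f (X i \<omega>)) = (1/2) ^ card {i\<in>{1..n}. X i \<omega> \<in> B}" for \<omega>
    unfolding f_def using prod.inter_filter[of "{1..n}" "\<lambda>_. (1/2::real)" "\<lambda>i. X i \<omega> \<in> B"]
    by (simp add: Int_def)
  have sumeq: "(\<Sum>i\<in>{1..n}. indicator B (X i \<omega>)) = real (card {i\<in>{1..n}. X i \<omega> \<in> B})" for \<omega>
    unfolding indicator_def using sum.inter_filter[of "{1..n}" "\<lambda>_. (1::real)" "\<lambda>i. X i \<omega> \<in> B"]
    by (simp add: Int_def)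
  have sub: "{\<omega>\<in>space M. (\<Sum>i\<in>{1..n}. indicator B (X i \<omega>)) < real k}
      \<subseteq> {\<omega>\<in>space M. (1/2::real)^k \<le> (\<Prod>i\<in>{1..n}. f (X i \<omega>))}"
    unfolding prodeq sumeq by (auto intro!: power_decreasing)
  have "prob {\<omega>\<in>space M. (\<Sum>i\<in>{1..n}. indicator B (X i \<omega>)) < real k}
      \<le> prob {\<omega>\<in>space M. (1/2::real)^k \<le> (\<Prod>i\<in>{1..n}. f (X i \<omega>))}"
    using sub Eint by (intro finite_measure_mono) auto
  also have "\<dots> \<le> expectation (\<lambda>\<omega>. \<Prod>i\<in>{1..n}. f (X i \<omega>)) / (1/2)^k"
    by (rule integral_Markov_inequality_measure[OF Eint, where A="space M"])
       (auto simp: f_def intro!: prod_nonneg)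
  also have "\<dots> \<le> 2^k * exp(-real n * p/2)"
    using E Ebound by (simp add: power_one_over)
  finally show ?thesis .
qed


lemma sball_neg:
  assumes "semimetric_on S d" "x \<in> S" "h < 0"
  shows "sball S d x h = {}"
  using assms unfolding semimetric_on_def sball_def by force

lemma sball_mono: "h \<le> h' \<Longrightarrow> sball S d x h \<subseteq> sball S d x h'"
  unfolding sball_def by auto

lemma knn_le:
  assumes sm: "semimetric_on S d" and x: "x \<in> S" and k: "k \<ge> 1"
    and h: "(\<Sum>i\<in>{1..n}. indicator (sball S d x h) (xs i)) \<ge> real k"
  shows "knn_radius S d x xs n k \<le> h"
  unfolding knn_radius_def
proof (rule cInf_lower)
  show "h \<in> {h. real k \<le> (\<Sum>i = 1..n. indicator (sball S d x h) (xs i))}" using h by simp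
  show "bdd_below {h. real k \<le> (\<Sum>i = 1..n. indicator (sball S d x h) (xs i)::real)}"
  proof (rule bdd_belowI[where m=0])
    fix h' assume "h' \<in> {h. real k \<le> (\<Sum>i = 1..n. indicator (sball S d x h) (xs i)::real)}"
    then have *: "real k \<le> (\<Sum>i = 1..n. indicator (sball S d x h') (xs i)::real)" by simp
    show "0 \<le> h'"
    proof (rule ccontr)
      assume "\<not> 0 \<le> h'"
      then have "sball S d x h' = {}" using sball_neg[OF sm x] by simp
      then show False using * k by simp
    qed
  qed
qed


theorem proposition1:
  fixes M :: "'w measure" and N :: "'a measure"
    and d :: "'a \<Rightarrow> 'a \<Rightarrow> real" and x :: 'a
    and X :: "nat \<Rightarrow> 'w \<Rightarrow> 'a" and k :: "nat \<Rightarrow> nat"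
  assumes "prob_space M"
    and "semimetric_on (space N) d"
    and "x \<in> space N"
    and balls_meas: "\<And>h. sball (space N) d x h \<in> sets N"
    and meas: "\<And>i. i \<ge> 1 \<Longrightarrow> X i \<in> measurable M N"
    and indep: "prob_space.indep_vars M (\<lambda>_. N) X {1..}"
    and ident: "\<And>i. i \<ge> 1 \<Longrightarrow> distr M N (X i) = distr M N (X 1)"
    and k_small: "(\<lambda>n. real (k n) / real n) \<longlonglongrightarrow> 0"
    and k_large: "filterlim (\<lambda>n. real (k n) / ln (real n)) at_top sequentially"
  shows "AE \<omega> in M. eventually (\<lambda>n.
           knn_radius (space N) d x (\<lambda>i. X i \<omega>) n (k n)
             \<le> gen_inv (small_ball_prob M (X 1) (space N) d x) (2 * real (k n) / real n))
         sequentially"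
proof -
  interpret P: prob_space M by fact
  note sm = \<open>semimetric_on (space N) d\<close> and xS = \<open>x \<in> space N\<close>
  define Bl where "Bl h = sball (space N) d x h" for h
  define \<phi> where "\<phi> = small_ball_prob M (X 1) (space N) d x"
  have Xev: "{\<omega>\<in>space M. X i \<omega> \<in> Bl h} \<in> P.events" if "i \<ge> 1" for i h
    using meas[OF that] balls_meas[of h] unfolding Bl_def by measurable
  have phi_i: "P.prob {\<omega>\<in>space M. X i \<omega> \<in> Bl h} = \<phi> h" if "i \<ge> 1" for i h
  proof -
    have "P.prob {\<omega>\<in>space M. X i \<omega> \<in> Bl h} = measure (distr M N (X i)) (Bl h)"
      using meas[OF that] balls_meas[of h] unfolding Bl_def
      by (subst measure_distr) (auto simp: vimage_def Int_def conj_commute)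
    also have "\<dots> = measure (distr M N (X 1)) (Bl h)" using ident[OF that] by simp
    also have "\<dots> = \<phi> h"
      using meas[of 1] balls_meas[of h] unfolding Bl_def \<phi>_def small_ball_prob_def
      by (subst measure_distr) (auto simp: vimage_def Int_def conj_commute)
    finally show ?thesis .
  qed
  have phi1: "P.prob {\<omega>\<in>space M. X 1 \<omega> \<in> Bl h} = \<phi> h" for h using phi_i[of 1] by simp
  have Xev1: "{\<omega>\<in>space M. X 1 \<omega> \<in> Bl h} \<in> P.events" for h using Xev[of 1] by simp
  have phi_neg: "\<phi> h = 0" if "h < 0" for h
    using phi1[of h] sball_neg[OF sm xS that] unfolding Bl_def by simp
  have phi_mono: "\<phi> h \<le> \<phi> h'" if "h \<le> h'" for h h'
    unfolding phi1[symmetric]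
    using Xev1[of h'] sball_mono[OF that, of "space N" d x] unfolding Bl_def
    by (intro P.finite_measure_mono) auto
  have phi_big: "\<exists>h. \<phi> h > 1/2"
  proof -
    define C where "C m = {\<omega>\<in>space M. X 1 \<omega> \<in> Bl (real m)}" for m :: nat
    have "(\<lambda>m. P.prob (C m)) \<longlonglongrightarrow> P.prob (\<Union>m. C m)"
    proof (rule P.finite_Lim_measure_incseq)
      show "range C \<subseteq> P.events" using Xev1 unfolding C_def by auto
      show "incseq C" unfolding incseq_def C_def Bl_def sball_def
      proof (intro allI impI subsetI)
        fix m n :: nat and \<omega> assume mn: "m \<le> n"
          and w: "\<omega> \<in> {\<omega> \<in> space M. X 1 \<omega> \<in> {x' \<in> space N. d x' x \<le> real m}}"
        have "real m \<le> real n" using mn by simp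
        then show "\<omega> \<in> {\<omega> \<in> space M. X 1 \<omega> \<in> {x' \<in> space N. d x' x \<le> real n}}"
          using w by auto
      qed
    qed
    moreover have "(\<Union>m. C m) = space M"
    proof safe
      fix \<omega> assume "\<omega> \<in> space M"
      then have "X 1 \<omega> \<in> space N" by (rule measurable_space[OF meas[OF order_refl]])
      moreover obtain m where "d (X 1 \<omega>) x \<le> real m" using real_arch_simple by blast
      ultimately show "\<omega> \<in> (\<Union>m. C m)" using \<open>\<omega> \<in> space M\<close>
        unfolding C_def Bl_def sball_def by blast
    qed (auto simp: C_def)
    ultimately have "(\<lambda>m. P.prob (C m)) \<longlonglongrightarrow> 1" by (simp add: P.prob_space)
    then have "eventually (\<lambda>m. P.prob (C m) > 1/2) sequentially"
      by (rule order_tendstoD) simp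
    then obtain m where "P.prob (C m) > 1/2" by (auto simp: eventually_sequentially)
    then show ?thesis using phi1[of "real m"] unfolding C_def by auto
  qed
  have phi_inv: "\<phi> (gen_inv \<phi> t) \<ge> t" if t: "0 < t" "t \<le> 1/2" for t
  proof -
    define A where "A = {h. \<phi> h \<ge> t}"
    define h0 where "h0 = Inf A"
    have ne: "A \<noteq> {}"
    proof -
      obtain h where "\<phi> h > 1/2" using phi_big by blast
      then have "h \<in> A" using t unfolding A_def by simp
      then show ?thesis by blast
    qed
    have bdd: "bdd_below A"
    proof (rule bdd_belowI[where m=0])
      fix h assume "h \<in> A"
      then have "t \<le> \<phi> h" unfolding A_def by simp
      then show "0 \<le> h" using phi_neg[of h] t by (cases "h < 0") auto
    qed
    have approx: "t \<le> \<phi> (h0 + 1 / Suc m)" for m :: nat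
    proof -
      have "h0 < h0 + 1 / Suc m" by simp
      then obtain a where "a \<in> A" "a < h0 + 1 / Suc m"
        using cInf_less_iff[OF ne bdd] unfolding h0_def by blast
      then show ?thesis using phi_mono[of a "h0 + 1 / Suc m"] unfolding A_def by auto
    qed
    define C where "C m = {\<omega>\<in>space M. X 1 \<omega> \<in> Bl (h0 + 1 / Suc m)}" for m :: nat
    have "(\<lambda>m. P.prob (C m)) \<longlonglongrightarrow> P.prob (\<Inter>m. C m)"
      using Xev1 unfolding C_def
    proof (intro P.finite_Lim_measure_decseq)
      show "decseq (\<lambda>m. {\<omega> \<in> space M. X 1 \<omega> \<in> Bl (h0 + 1 / real (Suc m))})"
        unfolding decseq_def Bl_def sball_def
        by (auto elim!: order.trans intro!: divide_left_mono)
    qed auto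
    moreover have "(\<Inter>m. C m) = {\<omega>\<in>space M. X 1 \<omega> \<in> Bl h0}"
    proof safe
      fix \<omega> assume "\<omega> \<in> (\<Inter>m. C m)"
      then have all: "\<And>m. \<omega> \<in> C m" by blast
      then show "\<omega> \<in> space M" unfolding C_def by auto
      show "X 1 \<omega> \<in> Bl h0"
      proof (rule ccontr)
        assume nin: "X 1 \<omega> \<notin> Bl h0"
        have inS: "X 1 \<omega> \<in> space N" and le: "\<And>m. d (X 1 \<omega>) x \<le> h0 + 1 / Suc m"
          using all[of 0] all unfolding C_def Bl_def sball_def by auto
        then have "d (X 1 \<omega>) x > h0" using nin unfolding Bl_def sball_def by auto
        then obtain m where "inverse (real (Suc m)) < d (X 1 \<omega>) x - h0"
          using reals_Archimedean[of "d (X 1 \<omega>) x - h0"] by auto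
        then show False using le[of m] by (simp add: field_simps)
      qed
    qed (auto simp: C_def Bl_def sball_def intro: order.trans)
    ultimately have "(\<lambda>m. \<phi> (h0 + 1 / Suc m)) \<longlonglongrightarrow> \<phi> h0"
      using phi1 unfolding C_def by simp
    then have "t \<le> \<phi> h0" by (rule LIMSEQ_le_const) (use approx in auto)
    then show ?thesis unfolding h0_def A_def gen_inv_def .
  qed
  define c where "c = 2 / (1 - ln (2::real))"
  have ln2: "ln (2::real) < 1" using ln_2_less_1 by simp
  have c_pos: "c > 0" unfolding c_def using ln2 by simp
  define good where "good n \<longleftrightarrow> n \<ge> 2 \<and> c \<le> real (k n) / ln (real n) \<and> real (k n) / real n < 1/4" for n
  have ev_good: "eventually good sequentially"
  proof -
    have "eventually (\<lambda>n. c \<le> real (k n) / ln (real n)) sequentially"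
      using k_large unfolding filterlim_at_top by blast
    moreover have "eventually (\<lambda>n. real (k n) / real n < 1/4) sequentially"
      by (rule order_tendstoD(2)[OF k_small]) simp
    moreover have "eventually (\<lambda>n. n \<ge> (2::nat)) sequentially" by (rule eventually_ge_at_top)
    ultimately show ?thesis unfolding good_def by eventually_elim auto
  qed
  have good_k: "k n \<ge> 1" "2 * real (k n) / real n > 0" "2 * real (k n) / real n \<le> 1/2"
     "(1 - ln 2) * real (k n) \<ge> 2 * ln (real n)" if "good n" for n
  proof -
    have n2: "n \<ge> 2" and ck: "c \<le> real (k n) / ln (real n)" and kn: "real (k n) / real n < 1/4"
      using that unfolding good_def by auto
    have lnpos: "ln (real n) > 0" using n2 by simp
    have "c * ln (real n) \<le> real (k n)" using ck lnpos by (simp add: field_simps)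
    then have ck2: "2 * ln (real n) \<le> (1 - ln 2) * real (k n)"
      using ln2 unfolding c_def by (simp add: field_simps)
    then show "(1 - ln 2) * real (k n) \<ge> 2 * ln (real n)" .
    have "real (k n) > 0" using \<open>c * ln (real n) \<le> real (k n)\<close> c_pos lnpos
      by (smt (verit) mult_pos_pos)
    then show "k n \<ge> 1" by simp
    show "2 * real (k n) / real n > 0" using \<open>real (k n) > 0\<close> n2 by simp
    show "2 * real (k n) / real n \<le> 1/2" using kn n2 by (simp add: field_simps)
  qed
  define h where "h n = gen_inv \<phi> (2 * real (k n) / real n)" for n
  define A where "A n = {\<omega>\<in>space M. (\<Sum>i\<in>{1..n}. indicator (Bl (h n)) (X i \<omega>)) < real (k n)}" for n
  have A_ev: "A n \<in> P.events" for n
  proof -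
    have "(\<lambda>\<omega>. (\<Sum>i\<in>{1..n}. indicator (Bl (h n)) (X i \<omega>) :: real)) \<in> borel_measurable M"
    proof (rule borel_measurable_sum)
      fix i assume "i \<in> {1..n}"
      then have "X i \<in> measurable M N" using meas by simp
      then show "(\<lambda>\<omega>. indicator (Bl (h n)) (X i \<omega>) :: real) \<in> borel_measurable M"
        using balls_meas unfolding Bl_def by measurable
    qed
    then show ?thesis unfolding A_def by measurable
  qed
  have bound: "P.prob (A n) \<le> inverse (real n ^ 2)" if "good n" for n
  proof -
    note g = good_k[OF that]
    have n2: "n \<ge> 2" using that unfolding good_def by simp
    define p where "p = \<phi> (h n)"
    have p_ge: "p \<ge> 2 * real (k n) / real n"
      unfolding p_def h_def using phi_inv[OF g(2) g(3)] .
    have "P.prob (A n) \<le> 2 ^ k n * exp (- real n * p / 2)"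
      unfolding A_def Bl_def
      by (rule P.chernoff_aux[OF meas indep balls_meas]) (use phi_i in \<open>auto simp: p_def Bl_def\<close>)
    also have "\<dots> \<le> 2 ^ k n * exp (- real (k n))"
    proof -
      have "real (k n) \<le> real n * p / 2" using p_ge n2 by (simp add: field_simps)
      then show ?thesis by (intro mult_left_mono) auto
    qed
    also have "\<dots> = exp (- ((1 - ln 2) * real (k n)))"
    proof -
      have "exp (real (k n) * ln 2) = exp (ln 2) ^ k n" by (rule exp_of_nat_mult)
      then have "(2::real) ^ k n = exp (real (k n) * ln 2)" by simp
      then show ?thesis by (simp add: exp_add[symmetric] algebra_simps)
    qed
    also have "\<dots> \<le> exp (- (2 * ln (real n)))" using g(4) by simp
    also have "\<dots> = inverse (real n ^ 2)"
    proof -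
      have "exp (real 2 * ln (real n)) = exp (ln (real n)) ^ 2" by (rule exp_of_nat_mult)
      then show ?thesis using n2 by (simp add: exp_minus)
    qed
    finally show ?thesis .
  qed
  have summ: "summable (\<lambda>n. P.prob (A n))"
  proof (rule summable_comparison_test_ev)
    show "eventually (\<lambda>n. norm (P.prob (A n)) \<le> inverse (real n ^ 2)) sequentially"
      using ev_good by eventually_elim (use bound in auto)
    show "summable (\<lambda>n. inverse (real n ^ 2))" by (rule inverse_power_summable) simp
  qed
  have BC: "AE \<omega> in M. eventually (\<lambda>n. \<omega> \<in> space M - A n) sequentially"
    by (rule borel_cantelli_AE1[OF A_ev _ summ]) (simp add: P.emeasure_eq_measure)
  show ?thesis
    using BC
  proof (rule AE_mp)
    show "AE \<omega> in M. eventually (\<lambda>n. \<omega> \<in> space M - A n) sequentially \<longrightarrow>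
       eventually (\<lambda>n. knn_radius (space N) d x (\<lambda>i. X i \<omega>) n (k n)
             \<le> gen_inv (small_ball_prob M (X 1) (space N) d x) (2 * real (k n) / real n)) sequentially"
    proof (intro AE_I2 impI)
      fix \<omega> assume w: "\<omega> \<in> space M" and ev: "eventually (\<lambda>n. \<omega> \<in> space M - A n) sequentially"
      show "eventually (\<lambda>n. knn_radius (space N) d x (\<lambda>i. X i \<omega>) n (k n)
             \<le> gen_inv (small_ball_prob M (X 1) (space N) d x) (2 * real (k n) / real n)) sequentially"
        using ev ev_good
      proof eventually_elim
        case (elim n)
        then have "\<not> (\<Sum>i\<in>{1..n}. indicator (Bl (h n)) (X i \<omega>)) < real (k n)"
          using w unfolding A_def by auto
        then have "real (k n) \<le> (\<Sum>i\<in>{1..n}. indicator (sball (space N) d x (h n)) (X i \<omega>))"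
          unfolding Bl_def by simp
        from knn_le[OF sm xS good_k(1)[OF elim(2)] this]
        show ?case unfolding h_def \<phi>_def .
      qed
    qed
  qed
qed

end
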